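(* Let $G_1$ be a $(q_1,q_2)$-semi-regular bipartite graph with bipartition $V_1,V_2$, $|V_1|=n_1\le n_2=|V_2|$, and put $\nu_1=n_1+n_2$, $\epsilon_1=n_1q_1=n_2q_2$. Let $G_2$ be a $(q_3,q_4)$-semi-regular bipartite graph with bipartition $V_3,V_4$, $|V_3|=n_3\le n_4=|V_4|$, and put $\nu_2=n_3+n_4$, $\epsilon_2=n_3q_3=n_4q_4$. Write the adjacency spectra as multisets $$spec(G_1)=\{\pm\lambda_1,\dots,\pm\lambda_{k_1},\underbrace{0,\dots,0}_{\nu_1-2k_1}\},\qquad spec(G_2)=\{\pm\mu_1,\dots,\pm\mu_{k_2},\underbrace{0,\dots,0}_{\nu_2-2k_2}\},$$ where $k_1$ (resp. $k_2$) is the number of positive eigenvalues of $G_1$ (resp. $G_2$), $\sqrt{q_1q_2}=\lambda_1\ge\lambda_2\ge\dots\ge\lambda_{k_1}>0$ and $\sqrt{q_3q_4}=\mu_1\ge\mu_2\ge\dots\ge\mu_{k_2}>0$. Let $G=G_1\vee G_2$ and let $\theta_1,\theta_2,\theta_3,\theta_4$ be the zeros of $$f(\lambda)=\lambda^4-(q_1q_2+q_3q_4+\nu_1\nu_2)\lambda^2-2(\nu_1\epsilon_2+\nu_2\epsilon_1)\lambda+q_1q_2q_3q_4-4\epsilon_1\epsilon_2.$$ Then, as multisets, $$spec(G)=\{\theta_1,\theta_2,\theta_3,\theta_4,\pm\lambda_2,\dots,\pm\lambda_{k_1},\pm\mu_2,\dots,\pm\mu_{k_2},\underbrace{0,\d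ots,0}_{\nu_1-2k_1+\nu_2-2k_2}\}.$$
   Context: A bipartite graph with bipartition $(V_1,V_2)$ is $(q_1,q_2)$-semi-regular if every vertex of $V_1$ has degree $q_1$ and every vertex of $V_2$ has degree $q_2$ (here $q_1,q_2\ge 1$). The join $G_1\vee G_2$ has vertex set $V(G_1)\cup V(G_2)$ (disjoint) and edge set $E(G_1)\cup E(G_2)\cup\{uv: u\in V(G_1), v\in V(G_2)\}$. The spectrum $spec(G)$ of a graph is the multiset of eigenvalues of its adjacency matrix. It is a known fact that the spectrum of a $(q_1,q_2)$-semi-regular bipartite graph is symmetric about $0$ with largest eigenvalue $\sqrt{q_1q_2}$, so the displayed forms of $spec(G_1)$, $spec(G_2)$ are notation. *)

theory Defs
  imports "Jordan_Normal_Form.Char_Poly" "HOL-Computational_Algebra.Polynomial"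
begin

definition simple_graph :: "'a set \<Rightarrow> ('a \<Rightarrow> 'a \<Rightarrow> bool) \<Rightarrow> bool" where
  "simple_graph V E \<longleftrightarrow> finite V \<and> (\<forall>x y. E x y \<longrightarrow> x \<in> V \<and> y \<in> V)
     \<and> (\<forall>x y. E x y \<longrightarrow> E y x) \<and> (\<forall>x. \<not> E x x)"

definition degree :: "'a set \<Rightarrow> ('a \<Rightarrow> 'a \<Rightarrow> bool) \<Rightarrow> 'a \<Rightarrow> nat" where
  "degree V E v = card {u \<in> V. E v u}"

definition semiregular_bipartite ::
  "'a set \<Rightarrow> ('a \<Rightarrow> 'a \<Rightarrow> bool) \<Rightarrow> 'a set \<Rightarrow> 'a set \<Rightarrow> nat \<Rightarrow> nat \<Rightarrow> bool" where
  "semiregular_bipartite V E V1 V2 q1 q2 \<longleftrightarrow>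
     simple_graph V E \<and> V1 \<union> V2 = V \<and> V1 \<inter> V2 = {} \<and>
     (\<forall>x y. E x y \<longrightarrow> (x \<in> V1 \<and> y \<in> V2) \<or> (x \<in> V2 \<and> y \<in> V1)) \<and>
     q1 \<ge> 1 \<and> q2 \<ge> 1 \<and>
     (\<forall>v\<in>V1. degree V E v = q1) \<and> (\<forall>v\<in>V2. degree V E v = q2)"

text \<open>An (arbitrary) enumeration of a finite vertex set; the characteristic polynomial
  of the adjacency matrix does not depend on this choice.\<close>
definition vlist :: "'a set \<Rightarrow> 'a list" where
  "vlist V = (SOME xs. set xs = V \<and> distinct xs)"

definition adj_mat :: "'a set \<Rightarrow> ('a \<Rightarrow> 'a \<Rightarrow> bool) \<Rightarrow> complex mat" where
  "adj_mat V E = (let xs = vlist V in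
     mat (length xs) (length xs) (\<lambda>(i, j). if E (xs ! i) (xs ! j) then 1 else 0))"

definition spec :: "'a set \<Rightarrow> ('a \<Rightarrow> 'a \<Rightarrow> bool) \<Rightarrow> complex multiset" where
  "spec V E = proots (char_poly (adj_mat V E))"

definition join_vertices :: "'a set \<Rightarrow> 'b set \<Rightarrow> ('a + 'b) set" where
  "join_vertices V W = Inl ` V \<union> Inr ` W"

fun join_edges :: "'a set \<Rightarrow> ('a \<Rightarrow> 'a \<Rightarrow> bool) \<Rightarrow> 'b set \<Rightarrow> ('b \<Rightarrow> 'b \<Rightarrow> bool)
    \<Rightarrow> ('a + 'b) \<Rightarrow> ('a + 'b) \<Rightarrow> bool" where
  "join_edges V E W F (Inl x) (Inl y) = E x y"
| "join_edges V E W F (Inr x) (Inr y) = F x y"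
| "join_edges V E W F (Inl x) (Inr y) = (x \<in> V \<and> y \<in> W)"
| "join_edges V E W F (Inr x) (Inl y) = (x \<in> W \<and> y \<in> V)"

end

theory Submission
  imports Defs
begin


lemma vlist: assumes "finite V" shows "set (vlist V) = V" "distinct (vlist V)"
proof -
  have "\<exists>xs. set xs = V \<and> distinct xs" using finite_distinct_list[OF assms] by blast
  from someI_ex[OF this] show "set (vlist V) = V" "distinct (vlist V)" unfolding vlist_def by auto
qed

lemma length_vlist: assumes "finite V" shows "length (vlist V) = card V"
  using vlist[OF assms] distinct_card by metis

lemma sum_nth_distinct: assumes "distinct xs"
  shows "(\<Sum>j<length xs. g (xs ! j)) = sum g (set xs)"
proof -
  have "(\<Sum>j<length xs. g (xs ! j)) = sum_list (map g xs)"
    by (simp add: sum_list_sum_nth lessThan_atLeast0)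
  also have "\<dots> = sum g (set xs)" using assms by (simp add: sum_list_distinct_conv_sum_set)
  finally show ?thesis .
qed




context
  fixes V V1 V2 :: "'a set" and E q1 q2
  assumes sr: "semiregular_bipartite V E V1 V2 q1 q2"
begin

lemma sr_basic: "finite V" "finite V1" "finite V2" "V1 \<union> V2 = V" "V1 \<inter> V2 = {}"
  "card V = card V1 + card V2" "q1 \<ge> 1" "q2 \<ge> 1"
  "\<And>x y. E x y \<Longrightarrow> x \<in> V \<and> y \<in> V" "\<And>x y. E x y \<Longrightarrow> E y x"
  "\<And>x y. E x y \<Longrightarrow> (x \<in> V1 \<and> y \<in> V2) \<or> (x \<in> V2 \<and> y \<in> V1)"
  "\<And>v. v \<in> V1 \<Longrightarrow> card {u \<in> V. E v u} = q1"
  "\<And>v. v \<in> V2 \<Longrightarrow> card {u \<in> V. E v u} = q2"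
  using sr unfolding semiregular_bipartite_def simple_graph_def degree_def
  by (auto simp: card_Un_disjoint intro: finite_subset)

lemma nbr_sum:
  fixes c1 c2 :: "'b::comm_ring_1"
  assumes v: "v \<in> V"
  shows "(\<Sum>u\<in>{u \<in> V. E v u}. (if u \<in> V1 then c1 else c2))
        = (if v \<in> V1 then of_nat q1 * c2 else of_nat q2 * c1)"
proof (cases "v \<in> V1")
  case True
  have "(\<Sum>u\<in>{u \<in> V. E v u}. (if u \<in> V1 then c1 else c2)) = (\<Sum>u\<in>{u \<in> V. E v u}. c2)"
    apply (rule sum.cong[OF refl]) using sr_basic(5,11) True by auto
  then show ?thesis using True sr_basic(12) by simp
next
  case False
  hence v2: "v \<in> V2" using v sr_basic(4) by auto
  have "(\<Sum>u\<in>{u \<in> V. E v u}. (if u \<in> V1 then c1 else c2)) = (\<Sum>u\<in>{u \<in> V. E v u}. c1)"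
    apply (rule sum.cong[OF refl]) using sr_basic(5,11) v2 by auto
  then show ?thesis using False v2 sr_basic(13) by simp
qed

lemma double_count: "card V1 * q1 = card V2 * q2"
proof -
  have "card V1 * q1 = (\<Sum>v\<in>V1. card {u \<in> V. E v u})" using sr_basic(12) by simp
  also have "\<dots> = (\<Sum>v\<in>V1. \<Sum>u\<in>V2. if E v u then 1 else 0)"
  proof (rule sum.cong[OF refl])
    fix v assume v: "v \<in> V1"
    have "{u \<in> V. E v u} = {u \<in> V2. E v u}" using v sr_basic(4,5,11) by blast
    then show "card {u \<in> V. E v u} = (\<Sum>u\<in>V2. if E v u then 1 else 0)"
      using sr_basic(3) sum.inter_filter[of V2 "\<lambda>_. 1::nat" "E v"] by simp
  qed
  also have "\<dots> = (\<Sum>u\<in>V2. \<Sum>v\<in>V1. if E u v then 1 else 0)"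
  proof -
    have "(\<Sum>v\<in>V1. \<Sum>u\<in>V2. if E v u then 1 else 0) = (\<Sum>u\<in>V2. \<Sum>v\<in>V1. if E v u then (1::nat) else 0)"
      by (rule sum.swap)
    also have "\<dots> = (\<Sum>u\<in>V2. \<Sum>v\<in>V1. if E u v then 1 else 0)"
    proof (intro sum.cong refl)
      fix u v show "(if E v u then (1::nat) else 0) = (if E u v then 1 else 0)"
        using sr_basic(10)[of u v] sr_basic(10)[of v u] by auto
    qed
    finally show ?thesis .
  qed
  also have "\<dots> = (\<Sum>u\<in>V2. card {v \<in> V. E u v})"
  proof (rule sum.cong[OF refl])
    fix v assume v: "v \<in> V2"
    have "{u \<in> V. E v u} = {u \<in> V1. E v u}" using v sr_basic(4,5,11) by blast
    then show "(\<Sum>u\<in>V1. if E v u then 1 else 0) = card {u \<in> V. E v u}"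
      using sr_basic(2) sum.inter_filter[of V1 "\<lambda>_. 1::nat" "E v"] by simp
  qed
  also have "\<dots> = card V2 * q2" using sr_basic(13) by simp
  finally show ?thesis .
qed

lemma adj_sum:
  fixes h :: "'a \<Rightarrow> complex"
  assumes i: "i < card V"
  shows "(\<Sum>k<card V. adj_mat V E $$ (i, k) * h (vlist V ! k))
       = (\<Sum>u\<in>{u \<in> V. E (vlist V ! i) u}. h u)"
proof -
  let ?xs = "vlist V"
  note L = length_vlist[OF sr_basic(1)] vlist[OF sr_basic(1)]
  have "(\<Sum>k<card V. adj_mat V E $$ (i, k) * h (?xs ! k))
     = (\<Sum>k<length ?xs. (\<lambda>u. if E (?xs ! i) u then h u else 0) (?xs ! k))"
    using i L by (intro sum.cong) (auto simp: adj_mat_def Let_def)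
  also have "\<dots> = (\<Sum>u\<in>V. if E (?xs ! i) u then h u else 0)"
    using L sum_nth_distinct[of ?xs "\<lambda>u. if E (?xs ! i) u then h u else 0"] by simp
  also have "\<dots> = (\<Sum>u\<in>{u \<in> V. E (vlist V ! i) u}. h u)"
    using sr_basic(1) by (simp add: sum.inter_filter)
  finally show ?thesis .
qed

lemma adj_carrier: "adj_mat V E \<in> carrier_mat (card V) (card V)"
  using length_vlist[OF sr_basic(1)] by (simp add: adj_mat_def Let_def)

lemma vlist_in: "i < card V \<Longrightarrow> vlist V ! i \<in> V"
  using length_vlist[OF sr_basic(1)] vlist[OF sr_basic(1)] by (metis nth_mem)

end



lemma mult_entry:
  assumes "A \<in> carrier_mat nr n" "B \<in> carrier_mat n nc" "i < nr" "j < nc"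
  shows "(A * B) $$ (i, j) = (\<Sum>k<n. A $$ (i, k) * B $$ (k, j))"
  using assms by (simp add: scalar_prod_def atLeast0LessThan)

lemma det_rank_one:
  fixes u :: "nat \<Rightarrow> 'a::idom"
  shows "det (1\<^sub>m m + mat m m (\<lambda>(i,j). u i)) = 1 + (\<Sum>i<m. u i)"
proof -
  define U where "U = mat m 1 (\<lambda>(i,j). u i)"
  define N where "N = (mat 1 m (\<lambda>_. -1) :: 'a mat)"
  define Ow where "Ow = (mat 1 m (\<lambda>_. 1) :: 'a mat)"
  define P where "P = four_block_mat (1\<^sub>m m) U N (1\<^sub>m 1)"
  define Q1 where "Q1 = four_block_mat (1\<^sub>m m) (0\<^sub>m m 1) Ow (1\<^sub>m 1)"
  define Q2 where "Q2 = four_block_mat (1\<^sub>m m) (- U) (0\<^sub>m 1 m) (1\<^sub>m 1)"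
  have U: "U \<in> carrier_mat m 1" and N: "N \<in> carrier_mat 1 m" and Ow: "Ow \<in> carrier_mat 1 m"
    by (auto simp: U_def N_def Ow_def)
  have P: "P \<in> carrier_mat (m+1) (m+1)" unfolding P_def by (rule four_block_carrier_mat) auto
  have Q1: "Q1 \<in> carrier_mat (m+1) (m+1)" unfolding Q1_def by (rule four_block_carrier_mat) auto
  have Q2: "Q2 \<in> carrier_mat (m+1) (m+1)" unfolding Q2_def by (rule four_block_carrier_mat) auto
  have dQ1: "det Q1 = 1" unfolding Q1_def
    by (subst det_four_block_mat_upper_right_zero[of _ m _ 1]) (use Ow in auto)
  have dQ2: "det Q2 = 1" unfolding Q2_def
    by (subst det_four_block_mat_lower_left_zero[of _ m _ 1]) (use U in auto)
  have PQ1: "P * Q1 = four_block_mat (1\<^sub>m m * 1\<^sub>m m + U * Ow) (1\<^sub>m m * 0\<^sub>m m 1 + U * 1\<^sub>m 1)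
      (N * 1\<^sub>m m + 1\<^sub>m 1 * Ow) (N * 0\<^sub>m m 1 + 1\<^sub>m 1 * 1\<^sub>m 1)"
    unfolding P_def Q1_def by (rule mult_four_block_mat) (use U N Ow in auto)
  have b1: "1\<^sub>m m * 1\<^sub>m m + U * Ow = 1\<^sub>m m + mat m m (\<lambda>(i,j). u i)"
    by (rule eq_matI) (use U Ow in \<open>auto simp: U_def Ow_def scalar_prod_def\<close>)
  have b3: "N * 1\<^sub>m m + 1\<^sub>m 1 * Ow = 0\<^sub>m 1 m"
    by (rule eq_matI) (use N Ow in \<open>auto simp: N_def Ow_def\<close>)
  have b2: "1\<^sub>m m * 0\<^sub>m m 1 + U * 1\<^sub>m 1 = U" using U by simp
  have b4: "N * 0\<^sub>m m 1 + 1\<^sub>m 1 * 1\<^sub>m 1 = (1\<^sub>m 1 :: 'a mat)" using N by simp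
  have "det (P * Q1) = det (1\<^sub>m m + mat m m (\<lambda>(i,j). u i))"
    unfolding PQ1 b1 b2 b3 b4
    by (subst det_four_block_mat_lower_left_zero[of _ m _ 1]) (use U in auto)
  hence e1: "det P = det (1\<^sub>m m + mat m m (\<lambda>(i,j). u i))"
    using det_mult[OF P Q1] dQ1 by simp
  have PQ2: "P * Q2 = four_block_mat (1\<^sub>m m * 1\<^sub>m m + U * 0\<^sub>m 1 m) (1\<^sub>m m * (- U) + U * 1\<^sub>m 1)
      (N * 1\<^sub>m m + 1\<^sub>m 1 * 0\<^sub>m 1 m) (N * (- U) + 1\<^sub>m 1 * 1\<^sub>m 1)"
    unfolding P_def Q2_def by (rule mult_four_block_mat) (use U N in auto)
  have c1: "1\<^sub>m m * 1\<^sub>m m + U * 0\<^sub>m 1 m = (1\<^sub>m m :: 'a mat)" using U by simp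
  have c3: "N * 1\<^sub>m m + 1\<^sub>m 1 * 0\<^sub>m 1 m = N" using N by simp
  have c2: "1\<^sub>m m * (- U) + U * 1\<^sub>m 1 = 0\<^sub>m m 1"
    by (rule eq_matI) (use U in auto)
  have c4: "N * (- U) + 1\<^sub>m 1 * 1\<^sub>m 1 = mat 1 1 (\<lambda>_. 1 + (\<Sum>i<m. u i))"
    by (rule eq_matI) (use U N in \<open>auto simp: U_def N_def scalar_prod_def atLeast0LessThan sum_negf\<close>)
  have "det (P * Q2) = 1 + (\<Sum>i<m. u i)"
    unfolding PQ2 c1 c2 c3 c4
    by (subst det_four_block_mat_upper_right_zero[of _ m _ 1]) (use N in \<open>auto simp: det_single\<close>)
  hence "det P = 1 + (\<Sum>i<m. u i)"
    using det_mult[OF P Q2] dQ2 by simp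
  with e1 show ?thesis by simp
qed


lemma det_join_block:
  fixes A1 A2 :: "complex mat" and a b :: "nat \<Rightarrow> complex"
  assumes A1: "A1 \<in> carrier_mat n n" and A2: "A2 \<in> carrier_mat m m"
    and H1: "\<And>i. i < n \<Longrightarrow> x * a i - (\<Sum>k<n. A1 $$ (i, k) * a k) = 1"
    and H2: "\<And>i. i < m \<Longrightarrow> x * b i - (\<Sum>k<m. A2 $$ (i, k) * b k) = 1"
  shows "det (- char_matrix (four_block_mat A1 (mat n m (\<lambda>_. 1)) (mat m n (\<lambda>_. 1)) A2) x)
    = det (- char_matrix A1 x) * det (- char_matrix A2 x) * (1 - (\<Sum>i<n. a i) * (\<Sum>i<m. b i))"
proof -
  define X1 where "X1 = - char_matrix A1 x"
  define X2 where "X2 = - char_matrix A2 x"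
  define s1 where "s1 = (\<Sum>i<n. a i)"
  define s2 where "s2 = (\<Sum>i<m. b i)"
  define J1 where "J1 = (mat n m (\<lambda>_. -1) :: complex mat)"
  define J2 where "J2 = (mat m n (\<lambda>_. -1) :: complex mat)"
  define Am where "Am = mat n m (\<lambda>(i,j). a i)"
  define B where "B = four_block_mat A1 (mat n m (\<lambda>_. 1)) (mat m n (\<lambda>_. 1)) A2"
  define M where "M = - char_matrix B x"
  define R where "R = four_block_mat (1\<^sub>m n) Am (0\<^sub>m m n) (1\<^sub>m m)"
  have X1: "X1 \<in> carrier_mat n n" and X2: "X2 \<in> carrier_mat m m"
    using A1 A2 by (auto simp: X1_def X2_def)
  have J1: "J1 \<in> carrier_mat n m" and J2: "J2 \<in> carrier_mat m n" and Am: "Am \<in> carrier_mat n m"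
    by (auto simp: J1_def J2_def Am_def)
  have X1e: "\<And>i j. i < n \<Longrightarrow> j < n \<Longrightarrow> X1 $$ (i,j) = (if i = j then x else 0) - A1 $$ (i,j)"
    using A1 by (auto simp: X1_def char_matrix_def)
  have X2e: "\<And>i j. i < m \<Longrightarrow> j < m \<Longrightarrow> X2 $$ (i,j) = (if i = j then x else 0) - A2 $$ (i,j)"
    using A2 by (auto simp: X2_def char_matrix_def)
  have MB: "M = four_block_mat X1 J1 J2 X2"
    by (rule eq_matI) (use A1 A2 X1 X2 in \<open>auto simp: M_def B_def char_matrix_def J1_def J2_def X1e X2e\<close>)
  have M: "M \<in> carrier_mat (n+m) (n+m)" using MB X1 X2 by simp
  have R: "R \<in> carrier_mat (n+m) (n+m)" using Am by (simp add: R_def)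
  have dR: "det R = 1" unfolding R_def
    by (subst det_four_block_mat_lower_left_zero[of _ n _ m]) (use Am in auto)
  have MR: "M * R = four_block_mat (X1 * 1\<^sub>m n + J1 * 0\<^sub>m m n) (X1 * Am + J1 * 1\<^sub>m m)
      (J2 * 1\<^sub>m n + X2 * 0\<^sub>m m n) (J2 * Am + X2 * 1\<^sub>m m)"
    unfolding MB R_def by (rule mult_four_block_mat) (use X1 X2 J1 J2 Am in auto)
  have sumX1: "(\<Sum>k<n. X1 $$ (i, k) * a k) = 1" if i: "i < n" for i
  proof -
    have "(\<Sum>k<n. X1 $$ (i, k) * a k) = (\<Sum>k<n. (if i = k then x * a k else 0) - A1 $$ (i,k) * a k)"
      by (rule sum.cong) (use i in \<open>auto simp: X1e algebra_simps\<close>)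
    also have "\<dots> = x * a i - (\<Sum>k<n. A1 $$ (i, k) * a k)"
      using i by (simp add: sum_subtractf)
    finally show ?thesis using H1[OF i] by simp
  qed
  have sumX2: "(\<Sum>k<m. X2 $$ (i, k) * b k) = 1" if i: "i < m" for i
  proof -
    have "(\<Sum>k<m. X2 $$ (i, k) * b k) = (\<Sum>k<m. (if i = k then x * b k else 0) - A2 $$ (i,k) * b k)"
      by (rule sum.cong) (use i in \<open>auto simp: X2e algebra_simps\<close>)
    also have "\<dots> = x * b i - (\<Sum>k<m. A2 $$ (i, k) * b k)"
      using i by (simp add: sum_subtractf)
    finally show ?thesis using H2[OF i] by simp
  qed
  have b2: "X1 * Am + J1 * 1\<^sub>m m = 0\<^sub>m n m"
  proof (rule eq_matI)
    fix i j assume ij: "i < dim_row (0\<^sub>m n m :: complex mat)" "j < dim_col (0\<^sub>m n m :: complex mat)"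
    have "(X1 * Am) $$ (i,j) = (\<Sum>k<n. X1 $$ (i, k) * a k)"
      using ij by (subst mult_entry[OF X1 Am]) (auto simp: Am_def)
    then show "(X1 * Am + J1 * 1\<^sub>m m) $$ (i, j) = 0\<^sub>m n m $$ (i, j)"
      using ij X1 Am J1 sumX1[of i] by (simp add: J1_def)
  qed (use X1 Am J1 in auto)
  define Y where "Y = J2 * Am + X2 * 1\<^sub>m m"
  have Y: "Y \<in> carrier_mat m m" using J2 Am X2 by (simp add: Y_def)
  have Ye: "Y $$ (i,j) = X2 $$ (i,j) - s1" if "i < m" "j < m" for i j
  proof -
    have "(J2 * Am) $$ (i,j) = (\<Sum>k<n. - a k)"
      using that by (subst mult_entry[OF J2 Am]) (auto simp: Am_def J2_def)
    then show ?thesis using that X2 J2 Am by (simp add: Y_def s1_def sum_negf)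
  qed
  define U where "U = (mat m m (\<lambda>(i,j). - s1 * b i) :: complex mat)"
  have YX: "Y = X2 * (1\<^sub>m m + U)"
  proof (rule eq_matI)
    fix i j assume ij: "i < dim_row (X2 * (1\<^sub>m m + U))" "j < dim_col (X2 * (1\<^sub>m m + U))"
    hence ij: "i < m" "j < m" using X2 by (auto simp: U_def)
    have "(X2 * (1\<^sub>m m + U)) $$ (i,j) = (\<Sum>k<m. X2 $$ (i, k) * ((if k = j then 1 else 0) - s1 * b k))"
      using ij by (subst mult_entry[OF X2]) (auto simp: U_def)
    also have "\<dots> = (\<Sum>k<m. (if k = j then X2 $$ (i, k) else 0) - s1 * (X2 $$ (i, k) * b k))"
      by (rule sum.cong) (auto simp: algebra_simps)
    also have "\<dots> = X2 $$ (i,j) - s1 * (\<Sum>k<m. X2 $$ (i, k) * b k)"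
      using ij by (simp add: sum_subtractf sum_distrib_left)
    also have "\<dots> = X2 $$ (i,j) - s1" using sumX2[OF ij(1)] by simp
    finally show "Y $$ (i, j) = (X2 * (1\<^sub>m m + U)) $$ (i, j)" using Ye[OF ij] by simp
  qed (use X2 Y in \<open>auto simp: U_def\<close>)
  have dY: "det Y = det X2 * (1 - s1 * s2)"
  proof -
    have "det Y = det X2 * det (1\<^sub>m m + U)"
      unfolding YX by (rule det_mult[OF X2]) (auto simp: U_def)
    also have "det (1\<^sub>m m + U) = 1 + (\<Sum>i<m. - s1 * b i)"
      unfolding U_def by (rule det_rank_one)
    also have "\<dots> = 1 - s1 * s2" by (simp add: s2_def sum_distrib_left sum_negf)
    finally show ?thesis .
  qed
  have b1: "X1 * 1\<^sub>m n + J1 * 0\<^sub>m m n = X1" using X1 J1 by simp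
  have b3: "J2 * 1\<^sub>m n + X2 * 0\<^sub>m m n = J2" using X2 J2 by simp
  have "det (M * R) = det X1 * det Y"
    unfolding MR b1 b2 b3 Y_def[symmetric]
    by (subst det_four_block_mat_upper_right_zero[of _ n _ m]) (use X1 J2 Y in auto)
  hence "det M = det X1 * det Y" using det_mult[OF M R] dR by simp
  hence "det M = det X1 * det X2 * (1 - s1 * s2)" using dY by (simp only: mult.assoc)
  thus ?thesis unfolding M_def B_def X1_def X2_def s1_def s2_def .
qed




context
  fixes V V1 V2 :: "'a set" and E q1 q2
  assumes sr: "semiregular_bipartite V E V1 V2 q1 q2"
begin

lemma h_sum:
  fixes c1 c2 :: complex
  shows "(\<Sum>i<card V. (\<lambda>u. if u \<in> V1 then c1 else c2) (vlist V ! i))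
       = of_nat (card V1) * c1 + of_nat (card V2) * c2"
proof -
  note B = sr_basic[OF sr]
  have "(\<Sum>i<card V. (\<lambda>u. if u \<in> V1 then c1 else c2) (vlist V ! i))
      = (\<Sum>u\<in>V. if u \<in> V1 then c1 else c2)"
    using sum_nth_distinct[OF vlist(2)[OF B(1)], of "\<lambda>u. if u \<in> V1 then c1 else c2"]
      length_vlist[OF B(1)] vlist(1)[OF B(1)] by simp
  also have "\<dots> = (\<Sum>u\<in>V1. if u \<in> V1 then c1 else c2) + (\<Sum>u\<in>V2. if u \<in> V1 then c1 else c2)"
    using B(2-5) by (metis sum.union_disjoint)
  also have "\<dots> = (\<Sum>u\<in>V1. c1) + (\<Sum>u\<in>V2. c2)"
  proof -
    have "(\<Sum>u\<in>V2. if u \<in> V1 then c1 else c2) = (\<Sum>u\<in>V2. c2)"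
      using B(5) by (intro sum.cong) auto
    moreover have "(\<Sum>u\<in>V1. if u \<in> V1 then c1 else c2) = (\<Sum>u\<in>V1. c1)"
      by (intro sum.cong) auto
    ultimately show ?thesis by simp
  qed
  finally show ?thesis by simp
qed

lemma h_apply:
  fixes c1 c2 :: complex
  assumes i: "i < card V"
  shows "(\<Sum>k<card V. adj_mat V E $$ (i, k) * (\<lambda>u. if u \<in> V1 then c1 else c2) (vlist V ! k))
     = (if vlist V ! i \<in> V1 then of_nat q1 * c2 else of_nat q2 * c1)"
proof -
  have e: "(\<Sum>k<card V. adj_mat V E $$ (i, k) * (\<lambda>u. if u \<in> V1 then c1 else c2) (vlist V ! k))
     = (\<Sum>u\<in>{u \<in> V. E (vlist V ! i) u}. if u \<in> V1 then c1 else c2)"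
    using adj_sum[OF sr i, of "\<lambda>u. if u \<in> V1 then c1 else c2"] by (simp only:)
  show ?thesis unfolding e by (rule nbr_sum[OF sr vlist_in[OF sr i]])
qed

lemma a_vec:
  fixes x :: complex
  assumes D: "x^2 - of_nat (q1*q2) \<noteq> 0"
  defines "a \<equiv> \<lambda>i. (\<lambda>u. if u \<in> V1 then (x + of_nat q1) / (x^2 - of_nat (q1*q2))
                            else (x + of_nat q2) / (x^2 - of_nat (q1*q2))) (vlist V ! i)"
  shows "\<And>i. i < card V \<Longrightarrow> x * a i - (\<Sum>k<card V. adj_mat V E $$ (i, k) * a k) = 1"
    and "(\<Sum>i<card V. a i) = (of_nat (card V) * x + 2 * of_nat (card V1 * q1)) / (x^2 - of_nat (q1*q2))"
proof -
  fix i assume i: "i < card V"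
  show "x * a i - (\<Sum>k<card V. adj_mat V E $$ (i, k) * a k) = 1"
    unfolding a_def h_apply[OF i] using D
    by (auto simp: field_simps power2_eq_square)
next
  note B = sr_basic[OF sr]
  have dc: "card V1 * q1 = card V2 * q2" by (rule double_count[OF sr])
  hence dc': "of_nat (card V2) * of_nat q2 = (of_nat (card V1) * of_nat q1 :: complex)"
    by (metis of_nat_mult)
  show "(\<Sum>i<card V. a i) = (of_nat (card V) * x + 2 * of_nat (card V1 * q1)) / (x^2 - of_nat (q1*q2))"
  proof -
    have "(\<Sum>i<card V. a i) = of_nat (card V1) * ((x + of_nat q1) / (x^2 - of_nat (q1*q2)))
       + of_nat (card V2) * ((x + of_nat q2) / (x^2 - of_nat (q1*q2)))"
      unfolding a_def by (rule h_sum)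
    also have "\<dots> = (of_nat (card V1) * (x + of_nat q1) + of_nat (card V2) * (x + of_nat q2)) / (x^2 - of_nat (q1*q2))"
      by (metis add_divide_distrib times_divide_eq_right)
    also have "of_nat (card V1) * (x + of_nat q1) + of_nat (card V2) * (x + of_nat q2)
       = of_nat (card V) * x + 2 * of_nat (card V1 * q1)"
      unfolding B(6) using dc' by (simp add: algebra_simps)
    finally show ?thesis .
  qed
qed

lemma eig_root:
  fixes l :: complex
  assumes V: "V \<noteq> {}" and l: "l^2 = of_nat (q1*q2)"
  shows "poly (char_poly (adj_mat V E)) l = 0"
proof -
  note B = sr_basic[OF sr]
  have q1: "(of_nat q1 :: complex) \<noteq> 0" using B(7) by simp
  have l0: "l \<noteq> 0" using l B(7,8) by auto
  define h where "h = (\<lambda>u. if u \<in> V1 then 1 else l / of_nat q1)"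
  define v where "v = vec (card V) (\<lambda>i. h (vlist V ! i))"
  have n: "card V > 0" using V B(1) by (simp add: card_gt_0_iff)
  have ev: "eigenvector (adj_mat V E) v l"
    unfolding eigenvector_def
  proof (intro conjI)
    show "v \<in> carrier_vec (dim_row (adj_mat V E))" using adj_carrier[OF sr] by (simp add: v_def)
    show "v \<noteq> 0\<^sub>v (dim_row (adj_mat V E))"
    proof
      assume "v = 0\<^sub>v (dim_row (adj_mat V E))"
      hence "v $ 0 = 0" using n adj_carrier[OF sr] by simp
      thus False using n q1 l0 by (auto simp: v_def h_def split: if_splits)
    qed
    show "adj_mat V E *\<^sub>v v = l \<cdot>\<^sub>v v"
    proof (rule eq_vecI)
      fix i assume "i < dim_vec (l \<cdot>\<^sub>v v)"
      hence i: "i < card V" by (simp add: v_def)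
      have "(adj_mat V E *\<^sub>v v) $ i = (\<Sum>k<card V. adj_mat V E $$ (i, k) * h (vlist V ! k))"
        using i adj_carrier[OF sr] by (simp add: scalar_prod_def atLeast0LessThan v_def)
      also have "\<dots> = (if vlist V ! i \<in> V1 then of_nat q1 * (l / of_nat q1) else of_nat q2 * 1)"
        unfolding h_def by (rule h_apply[OF i])
      also have "\<dots> = l * h (vlist V ! i)"
        using q1 l by (auto simp: h_def field_simps power2_eq_square)
      finally show "(adj_mat V E *\<^sub>v v) $ i = (l \<cdot>\<^sub>v v) $ i" using i by (simp add: v_def)
    qed (use adj_carrier[OF sr] in \<open>simp add: v_def\<close>)
  qed
  show ?thesis
    using eigenvalue_root_char_poly[OF adj_carrier[OF sr]] ev unfolding eigenvalue_def by blast
qed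

end

lemma sum_delta_l: "a < (n::nat) \<Longrightarrow> (\<Sum>k<n. (if a = k then 1 else 0) * f k) = (f a :: 'b::comm_ring_1)"
proof -
  assume a: "a < n"
  have "(\<Sum>k<n. (if a = k then 1 else 0) * f k) = (\<Sum>k<n. if a = k then f k else 0)"
    by (rule sum.cong) auto
  also have "\<dots> = f a" using a by (subst sum.delta') auto
  finally show ?thesis .
qed

lemma sum_delta_r: "a < (n::nat) \<Longrightarrow> (\<Sum>k<n. f k * (if a = k then 1 else 0)) = (f a :: 'b::comm_ring_1)"
  using sum_delta_l[of a n f] by (simp add: mult.commute)

lemma char_poly_reindex:
  fixes g :: "'a \<Rightarrow> 'a \<Rightarrow> complex"
  assumes dx: "distinct xs" and dy: "distinct ys" and s: "set xs = set ys"
  shows "char_poly (mat (length xs) (length xs) (\<lambda>(i,j). g (xs!i) (xs!j)))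
       = char_poly (mat (length ys) (length ys) (\<lambda>(i,j). g (ys!i) (ys!j)))"
proof -
  define n where "n = length xs"
  have ny: "length ys = n" unfolding n_def using dx dy s by (metis distinct_card)
  define \<sigma> where "\<sigma> = (\<lambda>i. THE j. j < n \<and> ys ! j = xs ! i)"
  have \<sigma>ex: "\<sigma> i < n \<and> ys ! \<sigma> i = xs ! i" if "i < n" for i
  proof -
    have "xs ! i \<in> set ys" using that s unfolding n_def by (metis nth_mem)
    then obtain j where j: "j < n" "ys ! j = xs ! i" using ny by (auto simp: in_set_conv_nth)
    have "\<exists>!j. j < n \<and> ys ! j = xs ! i"
    proof (rule ex1I[of _ j])
      fix k assume "k < n \<and> ys ! k = xs ! i"
      then show "k = j" using j dy ny by (metis nth_eq_iff_index_eq)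
    qed (use j in auto)
    then show ?thesis unfolding \<sigma>_def by (rule theI')
  qed
  have \<sigma>n: "\<sigma> i < n" if "i < n" for i using \<sigma>ex[OF that] by simp
  have \<sigma>y: "ys ! \<sigma> i = xs ! i" if "i < n" for i using \<sigma>ex[OF that] by simp
  have \<sigma>inj: "\<sigma> i = \<sigma> j \<longleftrightarrow> i = j" if "i < n" "j < n" for i j
    using that \<sigma>y dx by (metis n_def nth_eq_iff_index_eq)
  define P where "P = (mat n n (\<lambda>(i,j). if \<sigma> i = j then 1 else 0) :: complex mat)"
  define Q where "Q = (mat n n (\<lambda>(i,j). if \<sigma> j = i then 1 else 0) :: complex mat)"
  define A where "A = mat n n (\<lambda>(i,j). g (xs!i) (xs!j))"
  define B where "B = mat n n (\<lambda>(i,j). g (ys!i) (ys!j))"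
  have P: "P \<in> carrier_mat n n" and Q: "Q \<in> carrier_mat n n" and A: "A \<in> carrier_mat n n"
    and B: "B \<in> carrier_mat n n" by (auto simp: P_def Q_def A_def B_def)
  have PQ: "P * Q = 1\<^sub>m n"
  proof (rule eq_matI)
    fix i j assume ij: "i < dim_row (1\<^sub>m n :: complex mat)" "j < dim_col (1\<^sub>m n :: complex mat)"
    hence ij: "i < n" "j < n" by auto
    have "(P * Q) $$ (i,j) = (\<Sum>k<n. (if \<sigma> i = k then 1 else 0) * (if \<sigma> j = k then 1 else 0))"
      using ij by (subst mult_entry[OF P Q]) (auto simp: P_def Q_def)
    also have "\<dots> = (\<Sum>k<n. if \<sigma> i = k then (if \<sigma> j = k then 1 else 0) else 0)"
      by (rule sum.cong) auto
    also have "\<dots> = (if i = j then 1 else 0)" using ij \<sigma>n \<sigma>inj by simp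
    finally show "(P * Q) $$ (i,j) = 1\<^sub>m n $$ (i,j)" using ij by simp
  qed (use P Q in auto)
  have QP: "Q * P = 1\<^sub>m n" by (rule mat_mult_left_right_inverse[OF P Q PQ])
  have APBQ: "A = P * B * Q"
  proof (rule eq_matI)
    fix i j assume ij: "i < dim_row (P * B * Q)" "j < dim_col (P * B * Q)"
    hence ij: "i < n" "j < n" using P Q by auto
    have PB: "P * B \<in> carrier_mat n n" using P B by auto
    have "(P * B * Q) $$ (i,j) = (\<Sum>l<n. (P * B) $$ (i, l) * (if \<sigma> j = l then 1 else 0))"
      using ij by (subst mult_entry[OF PB Q]) (auto simp: Q_def)
    also have "\<dots> = (P * B) $$ (i, \<sigma> j)" using ij \<sigma>n by (simp only: sum_delta_r)
    also have "\<dots> = (\<Sum>k<n. (if \<sigma> i = k then 1 else 0) * B $$ (k, \<sigma> j))"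
      using ij \<sigma>n by (subst mult_entry[OF P B]) (auto simp: P_def)
    also have "\<dots> = B $$ (\<sigma> i, \<sigma> j)" using ij \<sigma>n by (simp only: sum_delta_l)
    also have "\<dots> = A $$ (i,j)" using ij \<sigma>n \<sigma>y by (simp add: A_def B_def)
    finally show "A $$ (i,j) = (P * B * Q) $$ (i,j)" by simp
  qed (use P Q A in auto)
  have "similar_mat A B" by (rule similar_matI[OF _ PQ QP APBQ]) (use P Q A B in auto)
  from char_poly_similar[OF this] show ?thesis unfolding A_def B_def n_def ny by simp
qed




lemma two_roots_factor:
  fixes p :: "complex poly"
  assumes "poly p a = 0" "poly p b = 0" "a \<noteq> b"
  shows "\<exists>g. p = ([:-a,1:] * [:-b,1:]) * g"
proof -
  obtain h where h: "p = [:-a,1:] * h" using assms(1) by (auto simp: poly_eq_0_iff_dvd dvd_def)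
  have "poly h b = 0" using assms(2,3) h by simp
  then obtain g where g: "h = [:-b,1:] * g" by (auto simp: poly_eq_0_iff_dvd dvd_def)
  have "p = ([:-a,1:] * [:-b,1:]) * g" using h g by (simp only: mult.assoc)
  thus ?thesis by blast
qed

lemma sqrt_sq: "(complex_of_real (sqrt (real k)))^2 = of_nat k"
proof -
  have "(complex_of_real (sqrt (real k)))^2 = complex_of_real ((sqrt (real k))^2)"
    by (simp only: of_real_power)
  also have "\<dots> = of_nat k" by simp
  finally show ?thesis .
qed

lemma graph_factor:
  assumes sr: "semiregular_bipartite V E V1 V2 q1 q2" and V: "V \<noteq> {}"
  defines "l \<equiv> complex_of_real (sqrt (real (q1*q2)))"
  shows "\<exists>g. char_poly (adj_mat V E) = ([:-l,1:] * [:l,1:]) * g \<and> g \<noteq> 0"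
proof -
  note B = sr_basic[OF sr]
  have l2: "l^2 = of_nat (q1*q2)" unfolding l_def by (rule sqrt_sq)
  have l0: "l \<noteq> 0" using B(7,8) unfolding l_def by simp
  have r1: "poly (char_poly (adj_mat V E)) l = 0" by (rule eig_root[OF sr V l2])
  have r2: "poly (char_poly (adj_mat V E)) (-l) = 0" by (rule eig_root[OF sr V]) (use l2 in simp)
  have ll: "l \<noteq> -l"
  proof
    assume "l = -l"
    hence "l + l = 0" by (metis add.right_inverse)
    hence "2 * l = 0" by simp
    thus False using l0 by simp
  qed
  obtain g where g: "char_poly (adj_mat V E) = ([:-l,1:] * [:-(-l),1:]) * g"
    using two_roots_factor[OF r1 r2 ll] by blast
  have "char_poly (adj_mat V E) \<noteq> 0"
    using degree_monic_char_poly[OF adj_carrier[OF sr]] by auto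
  then show ?thesis using g by auto
qed

lemma ys_nth:
  assumes "i < length xs + length ws"
  shows "(map Inl xs @ map Inr ws) ! i = (if i < length xs then Inl (xs ! i) else Inr (ws ! (i - length xs)))"
  using assms by (auto simp: nth_append)


lemma join_char_poly:
  assumes G1: "semiregular_bipartite V E V1 V2 q1 q2"
    and G2: "semiregular_bipartite W F V3 V4 q3 q4"
  shows "char_poly (adj_mat (join_vertices V W) (join_edges V E W F))
    = char_poly (four_block_mat (adj_mat V E) (mat (card V) (card W) (\<lambda>_. 1))
                   (mat (card W) (card V) (\<lambda>_. 1)) (adj_mat W F))"
proof -
  note B1 = sr_basic[OF G1] and B2 = sr_basic[OF G2]
  define xs where "xs = vlist V"
  define ws where "ws = vlist W"
  define ys where "ys = map Inl xs @ map Inr ws"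
  define g where "g = (\<lambda>u v. if join_edges V E W F u v then (1::complex) else 0)"
  have fin: "finite (join_vertices V W)" using B1(1) B2(1) by (simp add: join_vertices_def)
  have lx: "length xs = card V" and lw: "length ws = card W"
    unfolding xs_def ws_def using length_vlist B1(1) B2(1) by auto
  have dys: "distinct ys" unfolding ys_def xs_def ws_def
    using vlist(2)[OF B1(1)] vlist(2)[OF B2(1)] by (auto simp: distinct_map inj_on_def)
  have sys: "set ys = join_vertices V W" unfolding ys_def xs_def ws_def join_vertices_def
    using vlist(1)[OF B1(1)] vlist(1)[OF B2(1)] by auto
  have "char_poly (adj_mat (join_vertices V W) (join_edges V E W F))
     = char_poly (mat (length ys) (length ys) (\<lambda>(i,j). g (ys!i) (ys!j)))"
    unfolding adj_mat_def Let_def g_def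
    by (rule char_poly_reindex[OF vlist(2)[OF fin] dys]) (use sys vlist(1)[OF fin] in simp)
  also have "mat (length ys) (length ys) (\<lambda>(i,j). g (ys!i) (ys!j))
    = four_block_mat (adj_mat V E) (mat (card V) (card W) (\<lambda>_. 1))
                   (mat (card W) (card V) (\<lambda>_. 1)) (adj_mat W F)"
  proof (rule eq_matI)
    fix i j assume ij: "i < dim_row (four_block_mat (adj_mat V E) (mat (card V) (card W) (\<lambda>_. 1))
                   (mat (card W) (card V) (\<lambda>_. 1)) (adj_mat W F))"
        "j < dim_col (four_block_mat (adj_mat V E) (mat (card V) (card W) (\<lambda>_. 1))
                   (mat (card W) (card V) (\<lambda>_. 1)) (adj_mat W F))"
    hence ij: "i < card V + card W" "j < card V + card W"
      using adj_carrier[OF G1] adj_carrier[OF G2] by auto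
    have yi: "ys ! i = (if i < card V then Inl (xs ! i) else Inr (ws ! (i - card V)))"
      using ys_nth[of i xs ws] ij lx lw by (simp add: ys_def)
    have yj: "ys ! j = (if j < card V then Inl (xs ! j) else Inr (ws ! (j - card V)))"
      using ys_nth[of j xs ws] ij lx lw by (simp add: ys_def)
    have inV: "\<And>k. k < card V \<Longrightarrow> xs ! k \<in> V" unfolding xs_def by (rule vlist_in[OF G1])
    have inW: "\<And>k. k < card W \<Longrightarrow> ws ! k \<in> W" unfolding ws_def by (rule vlist_in[OF G2])
    have a1: "\<And>i j. i < card V \<Longrightarrow> j < card V \<Longrightarrow> adj_mat V E $$ (i,j) = (if E (xs!i) (xs!j) then 1 else 0)"
      using lx by (simp add: adj_mat_def Let_def xs_def)
    have a2: "\<And>i j. i < card W \<Longrightarrow> j < card W \<Longrightarrow> adj_mat W F $$ (i,j) = (if F (ws!i) (ws!j) then 1 else 0)"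
      using lw by (simp add: adj_mat_def Let_def ws_def)
    show "mat (length ys) (length ys) (\<lambda>(i,j). g (ys!i) (ys!j)) $$ (i, j) =
      four_block_mat (adj_mat V E) (mat (card V) (card W) (\<lambda>_. 1))
                   (mat (card W) (card V) (\<lambda>_. 1)) (adj_mat W F) $$ (i, j)"
    proof -
      have ly: "length ys = card V + card W" using lx lw by (simp add: ys_def)
      have L: "mat (length ys) (length ys) (\<lambda>(i,j). g (ys!i) (ys!j)) $$ (i, j) = g (ys!i) (ys!j)"
        using ij ly by simp
      have R: "four_block_mat (adj_mat V E) (mat (card V) (card W) (\<lambda>_. 1))
                   (mat (card W) (card V) (\<lambda>_. 1)) (adj_mat W F) $$ (i, j)
         = (if i < card V then if j < card V then adj_mat V E $$ (i,j) else 1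
            else if j < card V then 1 else adj_mat W F $$ (i - card V, j - card V))"
        using ij adj_carrier[OF G1] adj_carrier[OF G2] by simp
      have C: "g (ys!i) (ys!j) = (if i < card V then if j < card V then adj_mat V E $$ (i,j) else 1
            else if j < card V then 1 else adj_mat W F $$ (i - card V, j - card V))"
      proof (cases "i < card V"; cases "j < card V")
        assume "i < card V" "j < card V"
        then show ?thesis using yi yj a1 by (simp add: g_def)
      next
        assume "i < card V" "\<not> j < card V"
        then show ?thesis using yi yj inV inW ij by (simp add: g_def)
      next
        assume "\<not> i < card V" "j < card V"
        then show ?thesis using yi yj inV inW ij by (simp add: g_def)
      next
        assume "\<not> i < card V" "\<not> j < card V"
        then show ?thesis using yi yj a2 ij by (simp add: g_def)
      qed
      show ?thesis unfolding L R by (rule C)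
    qed
  qed (use adj_carrier[OF G1] adj_carrier[OF G2] lx lw in \<open>auto simp: ys_def\<close>)
  finally show ?thesis .
qed


lemma alg_aux:
  fixes P c1 c2 N1 N2 D1 D2 :: complex
  assumes "P = c1 * c2 * (1 - (N1 / D1) * (N2 / D2))" "D1 \<noteq> 0" "D2 \<noteq> 0"
  shows "P * (D1 * D2) = c1 * c2 * (D1 * D2 - N1 * N2)"
  using assms by (simp add: field_simps)

lemma eval_identity:
  assumes G1: "semiregular_bipartite V E V1 V2 q1 q2"
    and G2: "semiregular_bipartite W F V3 V4 q3 q4"
    and D1: "x^2 - of_nat (q1*q2) \<noteq> (0::complex)" and D2: "x^2 - of_nat (q3*q4) \<noteq> (0::complex)"
  shows "poly (char_poly (four_block_mat (adj_mat V E) (mat (card V) (card W) (\<lambda>_. 1))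
                   (mat (card W) (card V) (\<lambda>_. 1)) (adj_mat W F))) x
          * ((x^2 - of_nat (q1*q2)) * (x^2 - of_nat (q3*q4)))
       = poly (char_poly (adj_mat V E)) x * poly (char_poly (adj_mat W F)) x *
         ((x^2 - of_nat (q1*q2)) * (x^2 - of_nat (q3*q4))
          - (of_nat (card V) * x + 2 * of_nat (card V1 * q1)) * (of_nat (card W) * x + 2 * of_nat (card V3 * q3)))"
proof -
  define a where "a \<equiv> \<lambda>i. (\<lambda>u. if u \<in> V1 then (x + of_nat q1) / (x^2 - of_nat (q1*q2))
                            else (x + of_nat q2) / (x^2 - of_nat (q1*q2))) (vlist V ! i)"
  define b where "b \<equiv> \<lambda>i. (\<lambda>u. if u \<in> V3 then (x + of_nat q3) / (x^2 - of_nat (q3*q4))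
                            else (x + of_nat q4) / (x^2 - of_nat (q3*q4))) (vlist W ! i)"
  have H1: "\<And>i. i < card V \<Longrightarrow> x * a i - (\<Sum>k<card V. adj_mat V E $$ (i, k) * a k) = 1"
    unfolding a_def by (rule a_vec(1)[OF G1 D1])
  have S1: "(\<Sum>i<card V. a i) = (of_nat (card V) * x + 2 * of_nat (card V1 * q1)) / (x^2 - of_nat (q1*q2))"
    unfolding a_def by (rule a_vec(2)[OF G1 D1])
  have H2: "\<And>i. i < card W \<Longrightarrow> x * b i - (\<Sum>k<card W. adj_mat W F $$ (i, k) * b k) = 1"
    unfolding b_def by (rule a_vec(1)[OF G2 D2])
  have S2: "(\<Sum>i<card W. b i) = (of_nat (card W) * x + 2 * of_nat (card V3 * q3)) / (x^2 - of_nat (q3*q4))"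
    unfolding b_def by (rule a_vec(2)[OF G2 D2])
  have C: "four_block_mat (adj_mat V E) (mat (card V) (card W) (\<lambda>_. 1))
                   (mat (card W) (card V) (\<lambda>_. 1)) (adj_mat W F) \<in> carrier_mat (card V + card W) (card V + card W)"
    using adj_carrier[OF G1] adj_carrier[OF G2] by auto
  have "poly (char_poly (four_block_mat (adj_mat V E) (mat (card V) (card W) (\<lambda>_. 1))
                   (mat (card W) (card V) (\<lambda>_. 1)) (adj_mat W F))) x
     = poly (char_poly (adj_mat V E)) x * poly (char_poly (adj_mat W F)) x * (1 - (\<Sum>i<card V. a i) * (\<Sum>i<card W. b i))"
    unfolding char_poly_matrix[OF C] char_poly_matrix[OF adj_carrier[OF G1]] char_poly_matrix[OF adj_carrier[OF G2]]
    by (rule det_join_block[OF adj_carrier[OF G1] adj_carrier[OF G2] H1 H2])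
  then show ?thesis unfolding S1 S2 using D1 D2
    by (rule alg_aux)
qed


theorem theorem3p1:
  fixes V V1 V2 :: "'a set" and E :: "'a \<Rightarrow> 'a \<Rightarrow> bool"
    and W V3 V4 :: "'b set" and F :: "'b \<Rightarrow> 'b \<Rightarrow> bool"
    and q1 q2 q3 q4 :: nat
  assumes G1: "semiregular_bipartite V E V1 V2 q1 q2" and "V \<noteq> {}"
    and n12: "card V1 \<le> card V2"
    and G2: "semiregular_bipartite W F V3 V4 q3 q4" and "W \<noteq> {}"
    and n34: "card V3 \<le> card V4"
  shows "let n1 = card V1; n2 = card V2; n3 = card V3; n4 = card V4;
             \<nu>1 = n1 + n2; \<epsilon>1 = n1 * q1; \<nu>2 = n3 + n4; \<epsilon>2 = n3 * q3;
             f = [: of_int (int (q1*q2*q3*q4) - 4 * int (\<epsilon>1 * \<epsilon>2)),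
                    - 2 * of_nat (\<nu>1 * \<epsilon>2 + \<nu>2 * \<epsilon>1),
                    - of_nat (q1*q2 + q3*q4 + \<nu>1*\<nu>2), 0, 1 :] :: complex poly;
             lam1 = complex_of_real (sqrt (real (q1*q2)));
             mu1 = complex_of_real (sqrt (real (q3*q4)))
         in spec (join_vertices V W) (join_edges V E W F)
            = proots f + (spec V E - {#lam1, -lam1#}) + (spec W F - {#mu1, -mu1#})"
proof -
  note B1 = sr_basic[OF G1] and B2 = sr_basic[OF G2]
  define l1 where "l1 = complex_of_real (sqrt (real (q1*q2)))"
  define m1 where "m1 = complex_of_real (sqrt (real (q3*q4)))"
  define f where "f = ([: of_int (int (q1*q2*q3*q4) - 4 * int ((card V1 * q1) * (card V3 * q3))),
                    - 2 * of_nat ((card V1 + card V2) * (card V3 * q3) + (card V3 + card V4) * (card V1 * q1)),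
                    - of_nat (q1*q2 + q3*q4 + (card V1 + card V2)*(card V3 + card V4)), 0, 1 :] :: complex poly)"
  define cpB where "cpB = char_poly (four_block_mat (adj_mat V E) (mat (card V) (card W) (\<lambda>_. 1))
                   (mat (card W) (card V) (\<lambda>_. 1)) (adj_mat W F))"
  define cp1 where "cp1 = char_poly (adj_mat V E)"
  define cp2 where "cp2 = char_poly (adj_mat W F)"
  define D1 where "D1 = [:-l1,1:] * [:l1,1:]"
  define D2 where "D2 = [:-m1,1:] * [:m1,1:]"
  obtain g1 where g1: "cp1 = D1 * g1" "g1 \<noteq> 0"
    using graph_factor[OF G1 \<open>V \<noteq> {}\<close>] unfolding cp1_def D1_def l1_def by blast
  obtain g2 where g2: "cp2 = D2 * g2" "g2 \<noteq> 0"
    using graph_factor[OF G2 \<open>W \<noteq> {}\<close>] unfolding cp2_def D2_def m1_def by blast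
  have pD1: "poly D1 x = x^2 - of_nat (q1*q2)" for x
  proof -
    have "poly D1 x = x^2 - l1^2" by (simp add: D1_def algebra_simps power2_eq_square)
    thus ?thesis unfolding l1_def sqrt_sq .
  qed
  have pD2: "poly D2 x = x^2 - of_nat (q3*q4)" for x
  proof -
    have "poly D2 x = x^2 - m1^2" by (simp add: D2_def algebra_simps power2_eq_square)
    thus ?thesis unfolding m1_def sqrt_sq .
  qed
  have pf: "poly f x = (x^2 - of_nat (q1*q2)) * (x^2 - of_nat (q3*q4))
          - (of_nat (card V) * x + 2 * of_nat (card V1 * q1)) * (of_nat (card W) * x + 2 * of_nat (card V3 * q3))" for x
    unfolding B1(6) B2(6) by (simp add: f_def algebra_simps power2_eq_square power4_eq_xxxx)
  have key: "poly ((cpB * D1 * D2 - f * cp1 * cp2) * (D1 * D2)) x = 0" for x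
  proof (cases "poly D1 x = 0 \<or> poly D2 x = 0")
    case True then show ?thesis by auto
  next
    case False
    hence d1: "x^2 - of_nat (q1*q2) \<noteq> 0" and d2: "x^2 - of_nat (q3*q4) \<noteq> 0" using pD1 pD2 by auto
    have "poly cpB x * poly D1 x * poly D2 x = poly f x * poly cp1 x * poly cp2 x"
      using eval_identity[OF G1 G2 d1 d2] unfolding cpB_def cp1_def cp2_def pD1 pD2 pf
      by (simp add: algebra_simps)
    then show ?thesis by simp
  qed
  have "(cpB * D1 * D2 - f * cp1 * cp2) * (D1 * D2) = 0"
    using key poly_all_0_iff_0 by blast
  moreover have "D1 * D2 \<noteq> 0" by (simp add: D1_def D2_def)
  ultimately have "cpB * D1 * D2 = f * cp1 * cp2" by simp
  hence "cpB * (D1 * D2) = (f * g1 * g2) * (D1 * D2)" unfolding g1 g2 by (simp add: ac_simps)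
  hence cpB: "cpB = f * g1 * g2" using \<open>D1 * D2 \<noteq> 0\<close> by simp
  have f0: "f \<noteq> 0"
  proof
    assume "f = 0"
    hence "coeff f 4 = 0" by simp
    thus False by (simp add: f_def eval_nat_numeral)
  qed
  have pD1m: "proots D1 = {#l1, -l1#}" unfolding D1_def
    by (subst proots_mult) (auto simp: proots_linear_factor[of "-l1", simplified])
  have pD2m: "proots D2 = {#m1, -m1#}" unfolding D2_def
    by (subst proots_mult) (auto simp: proots_linear_factor[of "-m1", simplified])
  have D10: "D1 \<noteq> 0" and D20: "D2 \<noteq> 0" by (auto simp: D1_def D2_def)
  have s1: "spec V E - {#l1, -l1#} = proots g1"
    unfolding spec_def cp1_def[symmetric] g1(1) proots_mult[OF D10 g1(2)] pD1m by simp
  have s2: "spec W F - {#m1, -m1#} = proots g2"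
    unfolding spec_def cp2_def[symmetric] g2(1) proots_mult[OF D20 g2(2)] pD2m by simp
  have sj: "spec (join_vertices V W) (join_edges V E W F) = proots f + proots g1 + proots g2"
    unfolding spec_def join_char_poly[OF G1 G2] cpB_def[symmetric] cpB
    using f0 g1(2) g2(2) by (simp add: proots_mult)
  have main: "spec (join_vertices V W) (join_edges V E W F)
     = proots f + (spec V E - {#l1, -l1#}) + (spec W F - {#m1, -m1#})"
    unfolding sj s1 s2 ..
  show ?thesis unfolding Let_def using main by (simp only: f_def l1_def m1_def)
qed


end
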